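(* Let $0<p<1-1/e^2$ be constant, $b=\frac1{1-p}$, and $\gamma(n)=2\log_b n-2\log_b\log_b n-2\log_b 2$. Let $k=k(n)$ be positive integers with $\frac nk-\gamma(n)=O(1)$. Then, as $n\to\infty$, \[\frac{\bar\mu_{n,k+1}}{\bar\mu_{n,k}}\ge\exp\big(\Theta(\log n\log\log n)\big),\] i.e., there is a constant $C>0$ such that for large $n$ the ratio is at least $\exp(C\log n\log\log n)$.
   Context: For $n\in\mathbb{N}$ let $m(n)=\lfloor p\binom n2\rfloor$ and $G\sim\mathcal{G}(n,m(n))$, the uniform random graph on $n$ labelled vertices with exactly $m(n)$ edges. An ordered $k$-equipartition of $[n]$ is an ordered partition into $k$ parts each of size $\lceil n/k\rceil$ or $\lfloor n/k\rfloor$, the larger parts listed first. Let $k_{\mathrm L}=n-k\lfloor n/k\rfloor$ (number of parts of size $\lceil n/k\rceil$) and $k_{\mathrm S}=k-k_{\mathrm L}$. Let $X_{n,k}$ be the number of ordered $k$-equipartitions all of whose parts are independent in $G$, $\mu_{n,k}=\mathbb{E}[X_{n,k}]$ and $\bar\mu_{n,k}=\mu_{n,k}/(k_{\mathrm L}!\,k_{\mathrm S}!)$ (with $k_{\mathrm L},k_{\mathrm S}$ computed for the respective $k$). *)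

theory Defs
  imports "HOL-Probability.Probability" "HOL-Library.Landau_Symbols"
begin

definition all_edges :: "nat \<Rightarrow> nat set set" where
  "all_edges n = {e. e \<subseteq> {..<n} \<and> card e = 2}"

definition graphs_nm :: "nat \<Rightarrow> nat \<Rightarrow> nat set set set" where
  "graphs_nm n m = {E. E \<subseteq> all_edges n \<and> card E = m}"

definition Gnm :: "nat \<Rightarrow> nat \<Rightarrow> nat set set pmf" where
  "Gnm n m = pmf_of_set (graphs_nm n m)"

definition m_of :: "real \<Rightarrow> nat \<Rightarrow> nat" where
  "m_of p n = nat \<lfloor>p * real (n choose 2)\<rfloor>"

definition kL :: "nat \<Rightarrow> nat \<Rightarrow> nat" where
  "kL n k = n - k * (n div k)"

definition kS :: "nat \<Rightarrow> nat \<Rightarrow> nat" where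
  "kS n k = k - kL n k"

definition equipartitions :: "nat \<Rightarrow> nat \<Rightarrow> (nat \<Rightarrow> nat set) set" where
  "equipartitions n k = {P. P \<in> extensional {..<k}
      \<and> (\<Union>i<k. P i) = {..<n}
      \<and> (\<forall>i<k. \<forall>j<k. i \<noteq> j \<longrightarrow> P i \<inter> P j = {})
      \<and> (\<forall>i<k. card (P i) = (if i < kL n k then nat \<lceil>real n / real k\<rceil> else n div k))}"

definition independent_in :: "nat set set \<Rightarrow> nat set \<Rightarrow> bool" where
  "independent_in E S \<longleftrightarrow> (\<forall>u\<in>S. \<forall>v\<in>S. {u, v} \<notin> E)"

definition X_count :: "nat \<Rightarrow> nat \<Rightarrow> nat set set \<Rightarrow> nat" where
  "X_count n k E = card {P \<in> equipartitions n k. \<forall>i<k. independent_in E (P i)}"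

definition mu :: "real \<Rightarrow> nat \<Rightarrow> nat \<Rightarrow> real" where
  "mu p n k = measure_pmf.expectation (Gnm n (m_of p n)) (\<lambda>E. real (X_count n k E))"

definition mu_bar :: "real \<Rightarrow> nat \<Rightarrow> nat \<Rightarrow> real" where
  "mu_bar p n k = mu p n k / (fact (kL n k) * fact (kS n k))"

end

theory Submission
  imports Defs "HOL-Combinatorics.Multiset_Permutations" "HOL-Real_Asymp.Real_Asymp"
begin

definition sz :: "nat \<Rightarrow> nat \<Rightarrow> nat \<Rightarrow> nat" where
  "sz n k i = (if i < kL n k then nat \<lceil>real n / real k\<rceil> else n div k)"

lemma kL_eq: "kL n k = n mod k"
  by (simp add: kL_def minus_mult_div_eq_mod)

lemma ceil_eq:
  assumes "0 < n mod k" and k: "k > 0"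
  shows "nat \<lceil>real n / real k\<rceil> = n div k + 1"
proof -
  have e0: "n = k * (n div k) + n mod k" by simp
  have e: "real n = real k * real (n div k) + real (n mod k)"
    using arg_cong[OF e0, of real] by (simp only: of_nat_add of_nat_mult)
  have "n mod k < k" using k by simp
  hence "real (n mod k) < real k" by simp
  have "\<lceil>real n / real k\<rceil> = int (n div k) + 1"
  proof (rule ceiling_unique)
    have "real n / real k = real (n div k) + real (n mod k) / real k"
      using k e by (simp add: field_simps)
    moreover have "real (n mod k) / real k > 0" using assms k by simp
    moreover have "real (n mod k) / real k < 1" using \<open>real (n mod k) < real k\<close> k by simp
    ultimately show "of_int (int (n div k) + 1) - 1 < real n / real k"
      and "real n / real k \<le> of_int (int (n div k) + 1)" by auto
  qed
  thus ?thesis by simp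
qed

lemma sz_lo: "k > 0 \<Longrightarrow> i < n mod k \<Longrightarrow> sz n k i = n div k + 1"
  by (simp add: sz_def kL_eq ceil_eq)

lemma sz_hi: "n mod k \<le> i \<Longrightarrow> sz n k i = n div k"
  by (simp add: sz_def kL_eq)

lemma sum_sz_gen:
  fixes g :: "nat \<Rightarrow> 'a::comm_semiring_1"
  assumes "k > 0"
  shows "(\<Sum>i<k. g (sz n k i)) = of_nat (n mod k) * g (n div k + 1) + of_nat (k - n mod k) * g (n div k)"
proof -
  have le: "n mod k \<le> k" using assms by (simp add: less_imp_le)
  have "(\<Sum>i<k. g (sz n k i)) = (\<Sum>i<n mod k. g (sz n k i)) + (\<Sum>i\<in>{n mod k..<k}. g (sz n k i))"
    using sum.atLeastLessThan_concat[of 0 "n mod k" k "\<lambda>i. g (sz n k i)"] le by (simp add: atLeast0LessThan)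
  also have "(\<Sum>i<n mod k. g (sz n k i)) = (\<Sum>i<n mod k. g (n div k + 1))"
    by (rule sum.cong) (auto simp: sz_lo assms)
  also have "(\<Sum>i\<in>{n mod k..<k}. g (sz n k i)) = (\<Sum>i\<in>{n mod k..<k}. g (n div k))"
    by (rule sum.cong) (auto simp: sz_hi)
  finally show ?thesis by (simp add: mult_of_nat_commute)
qed

lemma prod_sz_gen:
  fixes g :: "nat \<Rightarrow> 'a::comm_monoid_mult"
  assumes "k > 0"
  shows "(\<Prod>i<k. g (sz n k i)) = g (n div k + 1) ^ (n mod k) * g (n div k) ^ (k - n mod k)"
proof -
  have le: "n mod k \<le> k" using assms by (simp add: less_imp_le)
  have "(\<Prod>i<k. g (sz n k i)) = (\<Prod>i<n mod k. g (sz n k i)) * (\<Prod>i\<in>{n mod k..<k}. g (sz n k i))"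
    using prod.atLeastLessThan_concat[of 0 "n mod k" k "\<lambda>i. g (sz n k i)"] le by (simp add: atLeast0LessThan)
  also have "(\<Prod>i<n mod k. g (sz n k i)) = (\<Prod>i<n mod k. g (n div k + 1))"
    by (rule prod.cong) (auto simp: sz_lo assms)
  also have "(\<Prod>i\<in>{n mod k..<k}. g (sz n k i)) = (\<Prod>i\<in>{n mod k..<k}. g (n div k))"
    by (rule prod.cong) (auto simp: sz_hi)
  finally show ?thesis by simp
qed

lemma aux_arith: "j \<le> k \<Longrightarrow> j * (a + 1) + (k - j) * a = k * a + (j::nat)"
proof -
  assume jk: "j \<le> k"
  have "(k - j) * a = k * a - j * a" by (rule diff_mult_distrib)
  moreover have "j * a \<le> k * a" using jk by (rule mult_right_mono) simp
  ultimately show ?thesis by (simp add: distrib_left)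
qed

lemma sum_sz: "k > 0 \<Longrightarrow> (\<Sum>i<k. sz n k i) = n"
proof -
  assume k: "k > 0"
  have "(\<Sum>i<k. sz n k i) = (n mod k) * (n div k + 1) + (k - n mod k) * (n div k)"
    using sum_sz_gen[OF k, of "\<lambda>x. x" n] by simp
  also have "\<dots> = k * (n div k) + n mod k"
    using aux_arith[of "n mod k" k "n div k"] k by simp
  finally show ?thesis by simp
qed

definition szM :: "nat \<Rightarrow> nat \<Rightarrow> nat multiset" where
  "szM n k = (\<Sum>i<k. replicate_mset (sz n k i) i)"

lemma count_szM: "count (szM n k) x = (if x < k then sz n k x else 0)"
  unfolding szM_def count_sum by (auto simp: count_replicate_mset)

lemma size_szM: "k > 0 \<Longrightarrow> size (szM n k) = n"
  unfolding szM_def by (simp add: sum_sz)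

lemma eq_sz: "P \<in> equipartitions n k \<Longrightarrow> i < k \<Longrightarrow> card (P i) = sz n k i"
  unfolding equipartitions_def sz_def by auto

definition Phi :: "nat \<Rightarrow> nat list \<Rightarrow> nat \<Rightarrow> nat set" where
  "Phi k xs = (\<lambda>i\<in>{..<k}. {j. j < length xs \<and> xs ! j = i})"

lemma count_card: "count (mset xs) i = card {j. j < length xs \<and> xs ! j = i}"
proof -
  have "count (mset xs) i = length (filter ((=) i) xs)"
    by (simp only: count_mset count_list_eq_length_filter)
  also have "\<dots> = card {j. j < length xs \<and> i = xs ! j}"
    by (rule length_filter_conv_card)
  finally show ?thesis by (simp add: eq_commute)
qed

lemma Phi_in:
  assumes k: "k > 0" and xs: "mset xs = szM n k"
  shows "Phi k xs \<in> equipartitions n k"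
proof -
  have len: "length xs = n" using arg_cong[OF xs, of size] size_szM[OF k] by simp
  have setx: "\<And>j. j < n \<Longrightarrow> xs ! j < k"
  proof -
    fix j assume "j < n"
    hence "xs ! j \<in> set xs" using len by simp
    hence "xs ! j \<in># szM n k" by (metis xs set_mset_mset)
    hence "count (szM n k) (xs ! j) > 0" by simp
    thus "xs ! j < k" by (simp add: count_szM split: if_splits)
  qed
  have cardi: "card (Phi k xs i) = sz n k i" if "i < k" for i
  proof -
    have "count (mset xs) i = sz n k i" using xs that by (simp add: count_szM)
    thus ?thesis using count_card[of xs i] that by (simp add: Phi_def)
  qed
  show ?thesis unfolding equipartitions_def
  proof (intro CollectI conjI allI impI)
    show "Phi k xs \<in> extensional {..<k}" by (simp add: Phi_def)
    show "(\<Union>i<k. Phi k xs i) = {..<n}" using setx by (auto simp: Phi_def len)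
    show "\<And>i j. i < k \<Longrightarrow> j < k \<Longrightarrow> i \<noteq> j \<Longrightarrow> Phi k xs i \<inter> Phi k xs j = {}"
      by (auto simp: Phi_def)
    fix i assume "i < k"
    thus "card (Phi k xs i) = (if i < kL n k then nat \<lceil>real n / real k\<rceil> else n div k)"
      using cardi sz_def by simp
  qed
qed

lemma Phi_inj:
  assumes k: "k > 0"
  shows "inj_on (Phi k) {xs. mset xs = szM n k}"
proof (rule inj_onI)
  fix xs ys assume xs: "xs \<in> {xs. mset xs = szM n k}" and ys: "ys \<in> {xs. mset xs = szM n k}"
    and eq: "Phi k xs = Phi k ys"
  have lx: "length xs = n" using xs size_szM[OF k] by (metis mem_Collect_eq size_mset)
  have ly: "length ys = n" using ys size_szM[OF k] by (metis mem_Collect_eq size_mset)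
  have setx: "\<And>j. j < n \<Longrightarrow> xs ! j < k"
  proof -
    fix j assume "j < n"
    hence "xs ! j \<in> set xs" using lx by simp
    hence "xs ! j \<in># szM n k" using xs by (metis mem_Collect_eq set_mset_mset)
    hence "count (szM n k) (xs ! j) > 0" by simp
    thus "xs ! j < k" by (simp add: count_szM split: if_splits)
  qed
  show "xs = ys"
  proof (rule nth_equalityI)
    show "length xs = length ys" using lx ly by simp
    fix j assume j: "j < length xs"
    hence "j \<in> Phi k xs (xs ! j)" using setx lx by (simp add: Phi_def)
    hence "j \<in> Phi k ys (xs ! j)" using eq by simp
    thus "xs ! j = ys ! j" using setx j lx by (simp add: Phi_def split: if_splits)
  qed
qed

lemma Phi_surj:
  assumes k: "k > 0" and P: "P \<in> equipartitions n k"
  shows "P \<in> Phi k ` {xs. mset xs = szM n k}"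
proof -
  have ext: "P \<in> extensional {..<k}" and un: "(\<Union>i<k. P i) = {..<n}"
    and dis: "\<And>i j. i < k \<Longrightarrow> j < k \<Longrightarrow> i \<noteq> j \<Longrightarrow> P i \<inter> P j = {}"
    using P unfolding equipartitions_def by auto
  define c where "c j = (THE i. i < k \<and> j \<in> P i)" for j
  have c: "c j < k \<and> j \<in> P (c j)" if "j < n" for j
  proof -
    obtain i where i: "i < k" "j \<in> P i" using un \<open>j < n\<close> by auto
    have "\<exists>!i. i < k \<and> j \<in> P i"
      using i dis by (intro ex1I[of _ i]) auto
    thus ?thesis unfolding c_def by (rule theI')
  qed
  have cu: "c j = i" if "j \<in> P i" "i < k" "j < n" for i j
    using c[OF \<open>j < n\<close>] dis that by blast
  define xs where "xs = map c [0..<n]"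
  have lx: "length xs = n" by (simp add: xs_def)
  have xsn: "xs ! j = c j" if "j < n" for j using that by (simp add: xs_def)
  have Pi: "P i = {j. j < length xs \<and> xs ! j = i}" if "i < k" for i
  proof
    show "P i \<subseteq> {j. j < length xs \<and> xs ! j = i}"
    proof
      fix j assume j: "j \<in> P i"
      hence "j < n" using un that by auto
      thus "j \<in> {j. j < length xs \<and> xs ! j = i}" using cu[OF j that] lx xsn by auto
    qed
    show "{j. j < length xs \<and> xs ! j = i} \<subseteq> P i"
      using c xsn lx by auto
  qed
  have "Phi k xs = P"
  proof (rule extensionalityI[OF _ ext])
    show "Phi k xs \<in> extensional {..<k}" by (simp add: Phi_def)
    fix i assume "i \<in> {..<k}"
    thus "Phi k xs i = P i" using Pi by (simp add: Phi_def)
  qed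
  moreover have "mset xs = szM n k"
  proof (rule multiset_eqI)
    fix i
    show "count (mset xs) i = count (szM n k) i"
    proof (cases "i < k")
      case True
      thus ?thesis using count_card[of xs i] Pi[OF True] eq_sz[OF P True] by (simp add: count_szM)
    next
      case False
      have "{j. j < length xs \<and> xs ! j = i} = {}" using c xsn lx False by fastforce
      thus ?thesis using count_card[of xs i] False by (simp add: count_szM)
    qed
  qed
  ultimately show ?thesis by blast
qed

lemma card_EQ:
  assumes k: "k > 0"
  shows "card (equipartitions n k) * (\<Prod>i<k. fact (sz n k i)) = (fact n :: nat)"
proof -
  have img: "Phi k ` {xs. mset xs = szM n k} = equipartitions n k"
    using Phi_in[OF k] Phi_surj[OF k] by blast
  have "card (equipartitions n k) = card (permutations_of_multiset (szM n k))"
    unfolding img[symmetric] permutations_of_multiset_def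
    by (rule card_image[OF Phi_inj[OF k]])
  moreover have "(\<Prod>x\<in>set_mset (szM n k). fact (count (szM n k) x)) = (\<Prod>i<k. fact (sz n k i) :: nat)"
  proof (rule prod.mono_neutral_cong_left)
    show "set_mset (szM n k) \<subseteq> {..<k}"
    proof
      fix x assume "x \<in># szM n k"
      hence "count (szM n k) x > 0" by simp
      thus "x \<in> {..<k}" by (simp add: count_szM split: if_splits)
    qed
    show "\<forall>i\<in>{..<k} - set_mset (szM n k). fact (sz n k i) = (1::nat)"
    proof
      fix i assume i: "i \<in> {..<k} - set_mset (szM n k)"
      hence "count (szM n k) i = 0" by (simp add: not_in_iff)
      thus "fact (sz n k i) = (1::nat)" using i by (simp add: count_szM)
    qed
    show "fact (count (szM n k) x) = fact (sz n k x)" if "x \<in> set_mset (szM n k)" for x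
    proof -
      have "count (szM n k) x > 0" using that by simp
      hence "x < k" by (simp add: count_szM split: if_splits)
      thus ?thesis by (simp add: count_szM)
    qed
  qed simp
  ultimately show ?thesis
    using card_permutations_of_multiset_aux[of "szM n k"] size_szM[OF k] by simp
qed

definition ff :: "nat \<Rightarrow> nat \<Rightarrow> nat" where
  "ff n k = (\<Sum>i<k. sz n k i choose 2)"

lemma card_filter_sum: "finite A \<Longrightarrow> card {x\<in>A. Q x} = (\<Sum>x\<in>A. if Q x then 1 else (0::nat))"
  by (simp add: sum.If_cases Int_def)

lemma sum_card_swap:
  assumes "finite A" "finite B"
  shows "(\<Sum>a\<in>A. card {b\<in>B. R a b}) = (\<Sum>b\<in>B. card {a\<in>A. R a b})"
  using assms by (simp add: card_filter_sum sum.swap[of _ A B])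

lemma all_edges_finite: "finite (all_edges n)"
  unfolding all_edges_def by (rule finite_subset[of _ "Pow {..<n}"]) auto

lemma card_all_edges: "card (all_edges n) = n choose 2"
  unfolding all_edges_def using n_subsets[of "{..<n}" 2] by simp

lemma graphs_finite: "finite (graphs_nm n m)"
  unfolding graphs_nm_def
  by (rule finite_subset[of _ "Pow (all_edges n)"]) (auto simp: all_edges_finite)

lemma card_graphs: "card (graphs_nm n m) = (n choose 2) choose m"
  unfolding graphs_nm_def using n_subsets[OF all_edges_finite, of n m] card_all_edges by simp

lemma graphs_ne: "m \<le> n choose 2 \<Longrightarrow> graphs_nm n m \<noteq> {}"
  using card_graphs[of n m] by (metis card.empty zero_less_binomial not_gr0)

definition FP :: "nat \<Rightarrow> nat \<Rightarrow> (nat \<Rightarrow> nat set) \<Rightarrow> nat set set" where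
  "FP n k P = {e \<in> all_edges n. \<exists>i<k. e \<subseteq> P i}"

lemma EQ_sub: "P \<in> equipartitions n k \<Longrightarrow> i < k \<Longrightarrow> P i \<subseteq> {..<n}"
  unfolding equipartitions_def by auto

lemma EQ_disj: "P \<in> equipartitions n k \<Longrightarrow> i < k \<Longrightarrow> j < k \<Longrightarrow> i \<noteq> j \<Longrightarrow> P i \<inter> P j = {}"
  unfolding equipartitions_def by auto

lemma card_FP:
  assumes P: "P \<in> equipartitions n k"
  shows "card (FP n k P) = ff n k"
proof -
  have eq: "FP n k P = (\<Union>i<k. {e. e \<subseteq> P i \<and> card e = 2})"
    using EQ_sub[OF P] unfolding FP_def all_edges_def by blast
  have fin: "finite (P i)" if "i < k" for i
    using EQ_sub[OF P that] finite_subset by blast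
  have "card (\<Union>i<k. {e. e \<subseteq> P i \<and> card e = 2}) = (\<Sum>i<k. card {e. e \<subseteq> P i \<and> card e = 2})"
  proof (rule card_UN_disjoint)
    show "finite {..<k}" by simp
    show "\<forall>i\<in>{..<k}. finite {e. e \<subseteq> P i \<and> card e = 2}"
      using fin by (auto intro: finite_subset[of _ "Pow (P _)"])
    show "\<forall>i\<in>{..<k}. \<forall>j\<in>{..<k}. i \<noteq> j \<longrightarrow>
        {e. e \<subseteq> P i \<and> card e = 2} \<inter> {e. e \<subseteq> P j \<and> card e = 2} = {}"
    proof (intro ballI impI)
      fix i j assume "i \<in> {..<k}" "j \<in> {..<k}" "i \<noteq> j"
      hence d: "P i \<inter> P j = {}" using EQ_disj[OF P] by auto
      show "{e. e \<subseteq> P i \<and> card e = 2} \<inter> {e. e \<subseteq> P j \<and> card e = 2} = {}"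
      proof (rule ccontr)
        assume "\<not> ?thesis"
        then obtain e where "e \<subseteq> P i" "e \<subseteq> P j" "card e = 2" by blast
        hence "e = {}" using d by blast
        thus False using \<open>card e = 2\<close> by simp
      qed
    qed
  qed
  also have "\<dots> = (\<Sum>i<k. sz n k i choose 2)"
    by (rule sum.cong) (auto simp: n_subsets fin eq_sz[OF P])
  finally show ?thesis unfolding eq ff_def .
qed

lemma indep_iff:
  assumes E: "E \<subseteq> all_edges n"
  shows "(\<forall>i<k. independent_in E (P i)) \<longleftrightarrow> E \<inter> FP n k P = {}"
proof
  assume ind: "\<forall>i<k. independent_in E (P i)"
  show "E \<inter> FP n k P = {}"
  proof (rule ccontr)
    assume "\<not> ?thesis"
    then obtain e i where e: "e \<in> E" "e \<subseteq> P i" "i < k" "card e = 2"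
      unfolding FP_def all_edges_def by blast
    then obtain u v where "e = {u, v}" by (meson card_2_iff)
    thus False using ind e unfolding independent_in_def by blast
  qed
next
  assume dis: "E \<inter> FP n k P = {}"
  show "\<forall>i<k. independent_in E (P i)"
    unfolding independent_in_def
  proof (intro allI impI ballI)
    fix i u v assume "i < k" "u \<in> P i" "v \<in> P i"
    show "{u, v} \<notin> E"
    proof
      assume "{u, v} \<in> E"
      hence "{u, v} \<in> all_edges n" using E by blast
      hence "{u, v} \<in> FP n k P" unfolding FP_def using \<open>i < k\<close> \<open>u \<in> P i\<close> \<open>v \<in> P i\<close> by blast
      thus False using dis \<open>{u, v} \<in> E\<close> by blast
    qed
  qed
qed

lemma card_good_graphs:
  assumes P: "P \<in> equipartitions n k"
  shows "card {E \<in> graphs_nm n m. \<forall>i<k. independent_in E (P i)} = ((n choose 2) - ff n k) choose m"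
proof -
  have sub: "FP n k P \<subseteq> all_edges n" unfolding FP_def by blast
  have "{E \<in> graphs_nm n m. \<forall>i<k. independent_in E (P i)} = {E. E \<subseteq> all_edges n - FP n k P \<and> card E = m}"
    using indep_iff unfolding graphs_nm_def by blast
  moreover have "card (all_edges n - FP n k P) = (n choose 2) - ff n k"
    using card_Diff_subset[OF finite_subset[OF sub all_edges_finite] sub] card_FP[OF P] card_all_edges
    by simp
  ultimately show ?thesis using n_subsets[of "all_edges n - FP n k P" m] all_edges_finite by simp
qed

lemma EQ_finite: "finite (equipartitions n k)"
proof (rule finite_subset)
  show "equipartitions n k \<subseteq> PiE {..<k} (\<lambda>_. Pow {..<n})"
    unfolding equipartitions_def PiE_def Pi_def by auto
  show "finite (PiE {..<k} (\<lambda>_. Pow {..<n}))" by (rule finite_PiE) auto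
qed

lemma mu_formula:
  assumes m: "m_of p n \<le> n choose 2"
  shows "mu p n k = real (card (equipartitions n k)) * real (((n choose 2) - ff n k) choose (m_of p n))
                    / real ((n choose 2) choose (m_of p n))"
proof -
  let ?m = "m_of p n" and ?G = "graphs_nm n (m_of p n)" and ?EQ = "equipartitions n k"
  have "mu p n k = (\<Sum>E\<in>?G. real (X_count n k E)) / real (card ?G)"
    unfolding mu_def Gnm_def by (rule integral_pmf_of_set[OF graphs_ne[OF m] graphs_finite])
  also have "(\<Sum>E\<in>?G. real (X_count n k E)) = real (\<Sum>E\<in>?G. X_count n k E)" by simp
  also have "(\<Sum>E\<in>?G. X_count n k E) = (\<Sum>P\<in>?EQ. card {E\<in>?G. \<forall>i<k. independent_in E (P i)})"
    unfolding X_count_def by (rule sum_card_swap[OF graphs_finite EQ_finite])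
  also have "\<dots> = (\<Sum>P\<in>?EQ. ((n choose 2) - ff n k) choose ?m)"
    by (rule sum.cong) (auto simp: card_good_graphs)
  also have "\<dots> = card ?EQ * (((n choose 2) - ff n k) choose ?m)" by simp
  finally show ?thesis by (simp add: card_graphs)
qed

definition Wd :: "nat \<Rightarrow> nat \<Rightarrow> nat \<Rightarrow> nat" where
  "Wd k a j = fact (a+1) ^ j * fact a ^ (k - j) * fact j * fact (k - j)"

lemma fact_add_le: "fact (y + d) \<le> (fact y * (y + d) ^ d :: nat)"
proof (induction d)
  case 0 thus ?case by simp
next
  case (Suc d)
  have "fact (y + Suc d) = (y + Suc d) * (fact (y + d) :: nat)" by (simp only: add_Suc_right fact_Suc of_nat_id)
  also have "\<dots> \<le> (y + Suc d) * (fact y * (y + d) ^ d)" using Suc.IH by (rule mult_le_mono2)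
  also have "\<dots> \<le> (y + Suc d) * (fact y * (y + Suc d) ^ d)"
    by (intro mult_le_mono le_refl power_mono) auto
  also have "\<dots> = fact y * (y + Suc d) ^ Suc d" by (simp only: power_Suc mult.assoc mult.left_commute)
  finally show ?case .
qed

lemma fact_le_mult_pow:
  assumes "x \<le> y + r" "x \<le> M" "1 \<le> M"
  shows "fact x \<le> fact y * M ^ r"
proof (cases "x \<le> y")
  case True
  have "fact x \<le> (fact y :: nat)" using True by (rule fact_mono_nat)
  also have "\<dots> \<le> fact y * M ^ r" using assms(3) by simp
  finally show ?thesis .
next
  case False
  then obtain d where d: "x = y + d" "d \<le> r" using assms(1) by (metis le_add_diff_inverse nat_le_linear add_le_cancel_left)
  have "fact x \<le> fact y * x ^ d" using fact_add_le[of y d] d by simp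
  also have "\<dots> \<le> fact y * M ^ d" using assms(2) by (simp add: power_mono)
  also have "\<dots> \<le> fact y * M ^ r" using assms(3) d(2) by (simp add: power_increasing)
  finally show ?thesis .
qed

lemma fact_mult_le: "fact a * fact u \<le> (fact (u + a) :: nat)"
  by (metis add.commute dvd_imp_le fact_fact_dvd_fact fact_gt_zero)

lemma W1:
  fixes u a v :: nat
  shows "Wd (u+a+v+1) a u * a^(a-1) \<le> Wd (u+a+v) a (u+a) * (u+a+v+1)^(a+1)"
proof -
  define X :: nat where "X = fact (a+1) ^ u * fact a ^ a * fact a ^ v"
  define K :: nat where "K = u+a+v+1"
  have L: "Wd (u+a+v+1) a u * a^(a-1) = X * (fact a * fact u) * fact (a+v+1) * a^(a-1)"
  proof -
    have "u+a+v+1 - u = a+v+1" by simp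
    thus ?thesis unfolding Wd_def X_def by (simp add: power_add algebra_simps)
  qed
  have R: "Wd (u+a+v) a (u+a) * (u+a+v+1)^(a+1) = X * fact (u+a) * (fact v * K^(a+1)) * (a+1)^a"
  proof -
    have "u+a+v - (u+a) = v" by simp
    moreover have "fact (a+1) ^ (u+a) = fact (a+1) ^ u * (a+1)^a * fact a ^ a"
    proof -
      have "fact (a+1) = (a+1) * (fact a :: nat)" by (metis fact_Suc Suc_eq_plus1 of_nat_id)
      thus ?thesis by (simp only: power_add power_mult_distrib mult.assoc)
    qed
    ultimately show ?thesis unfolding Wd_def X_def K_def by (simp add: algebra_simps)
  qed
  have 1: "fact a * fact u \<le> (fact (u+a) :: nat)" by (rule fact_mult_le)
  have 2: "fact (a+v+1) \<le> (fact v * K^(a+1) :: nat)"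
    by (rule fact_le_mult_pow) (auto simp: K_def)
  have 3: "a^(a-1) \<le> (a+1)^a"
  proof -
    have "a^(a-1) \<le> (a+1)^(a-1)" by (simp add: power_mono)
    also have "\<dots> \<le> (a+1)^a" by (rule power_increasing) auto
    finally show ?thesis .
  qed
  have "X * (fact a * fact u) * fact (a+v+1) * a^(a-1) \<le> X * fact (u+a) * (fact v * K^(a+1)) * (a+1)^a"
    using 1 2 3 by (intro mult_le_mono le_refl)
  thus ?thesis by (simp only: L R)
qed

lemma fact_le_pow_self: "fact n \<le> (n ^ n :: nat)"
  using fact_le_power[of n, where 'a=nat] by simp

lemma W2_star:
  fixes j s w :: nat
  defines "a \<equiv> j+s+1" and "K \<equiv> j+s+w+2"
  assumes aa: "a*a \<le> K"
  shows "fact (j+w+1) * fact (s+1) * a^(j+s) \<le> (a+1)^j * fact (s+1+w) * K^(a+1)"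
proof (cases "s \<le> j")
  case True
  have K1: "1 \<le> K" unfolding K_def by simp
  have f1: "fact (j+w+1) \<le> fact (s+1+w) * K^(j-s)"
    by (rule fact_le_mult_pow) (use True in \<open>auto simp: K_def\<close>)
  have f2: "fact (s+1) \<le> a^(s+1)"
  proof -
    have "fact (s+1) \<le> (s+1)^(s+1)" by (rule fact_le_pow_self)
    also have "\<dots> \<le> a^(s+1)" by (rule power_mono) (auto simp: a_def)
    finally show ?thesis .
  qed
  have f3: "a^(j+s) \<le> (a+1)^j * a^s"
    by (simp add: power_add power_mono)
  have f4: "a^(s+1) * a^s \<le> (a*a)^(s+1)"
    by (simp add: power_mult_distrib power_add)
  hence f5: "a^(s+1) * a^s \<le> K^(s+1)" using aa by (meson order.trans power_mono zero_le)
  have "fact (j+w+1) * fact (s+1) * a^(j+s) \<le> (fact (s+1+w) * K^(j-s)) * a^(s+1) * ((a+1)^j * a^s)"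
    using f1 f2 f3 by (intro mult_le_mono)
  also have "\<dots> = (a+1)^j * fact (s+1+w) * K^(j-s) * (a^(s+1) * a^s)" by (simp add: algebra_simps)
  also have "(a+1)^j * fact (s+1+w) * K^(j-s) * (a^(s+1) * a^s) \<le> (a+1)^j * fact (s+1+w) * K^(j-s) * K^(s+1)"
    using f5 by (rule mult_le_mono2)
  also have "\<dots> = (a+1)^j * fact (s+1+w) * K^(j+1)"
    using True by (simp add: power_add[symmetric] mult.assoc)
  also have "\<dots> \<le> (a+1)^j * fact (s+1+w) * K^(a+1)"
    using K1 by (intro mult_le_mono2 power_increasing) (auto simp: a_def)
  finally show ?thesis .
next
  case False
  have f1: "fact (j+w+1) \<le> (fact (s+1+w) :: nat)" by (rule fact_mono_nat) (use False in auto)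
  have f2: "fact (s+1) * a^(j+s) \<le> (a*a)^a"
  proof -
    have "fact (s+1) \<le> (s+1)^(s+1)" by (rule fact_le_pow_self)
    also have "\<dots> \<le> a^(s+1)" by (rule power_mono) (auto simp: a_def)
    also have "\<dots> \<le> a^a" by (rule power_increasing) (auto simp: a_def)
    finally have "fact (s+1) \<le> a^a" .
    moreover have "a^(j+s) \<le> a^a" by (rule power_increasing) (auto simp: a_def)
    ultimately have "fact (s+1) * a^(j+s) \<le> a^a * a^a" by (rule mult_le_mono)
    thus ?thesis by (simp add: power_mult_distrib)
  qed
  also have "\<dots> \<le> K^a" using aa by (rule power_mono) simp
  also have "\<dots> \<le> K^(a+1)" by (rule power_increasing) (auto simp: K_def)
  finally have f3: "fact (s+1) * a^(j+s) \<le> K^(a+1)" .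
  have "fact (j+w+1) * fact (s+1) * a^(j+s) = fact (j+w+1) * (fact (s+1) * a^(j+s))" by simp
  also have "\<dots> \<le> fact (s+1+w) * K^(a+1)" using f1 f3 by (rule mult_le_mono)
  also have "\<dots> \<le> (a+1)^j * (fact (s+1+w) * K^(a+1))" by simp
  finally show ?thesis by (simp add: mult.assoc)
qed

lemma W2:
  fixes j s w :: nat
  assumes aa: "(j+s+1)*(j+s+1) \<le> j+s+w+2"
  shows "Wd (j+s+w+2) (j+s) (j+w+1) * (j+s+1)^(j+s) \<le> Wd (j+s+w+1) (j+s+1) j * (j+s+w+2)^(j+s+2)"
proof -
  define a where "a = j+s+1"
  define K where "K = j+s+w+2"
  define A :: nat where "A = fact a"
  define B :: nat where "B = fact (j+s)"
  have AB: "A = a * B" unfolding A_def B_def a_def by (metis fact_Suc Suc_eq_plus1 of_nat_id)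
  have apos: "a > 0" unfolding a_def by simp
  have LW: "Wd K (j+s) (j+w+1) = A^(j+w+1) * B^(s+1) * fact (j+w+1) * fact (s+1)"
  proof -
    have "K - (j+w+1) = s+1" unfolding K_def by simp
    thus ?thesis unfolding Wd_def A_def B_def a_def by (simp add: add.commute add.left_commute)
  qed
  have RW: "Wd (j+s+w+1) a j = (a+1)^j * A^j * A^(s+1+w) * fact j * fact (s+1+w)"
  proof -
    have "j+s+w+1 - j = s+1+w" by simp
    moreover have "fact (a+1) = (a+1) * A" unfolding A_def by (metis fact_Suc Suc_eq_plus1 of_nat_id)
    ultimately have "Wd (j+s+w+1) a j = fact (a+1)^j * A^(s+1+w) * fact j * fact (s+1+w)"
      unfolding Wd_def A_def by simp
    also have "fact (a+1)^j = (a+1)^j * A^j"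
      using \<open>fact (a+1) = (a+1) * A\<close> by (simp only: power_mult_distrib)
    finally show ?thesis by (simp only: mult.assoc)
  qed
  have st: "fact (j+w+1) * fact (s+1) * a^(j+s) \<le> (a+1)^j * fact (s+1+w) * K^(a+1)"
    using W2_star[of j s w] aa unfolding a_def K_def by simp
  have Ale: "A \<le> fact j * a^(s+1)"
    unfolding A_def by (rule fact_le_mult_pow) (auto simp: a_def)
  have "a^(s+1) * (Wd K (j+s) (j+w+1) * a^(j+s)) = A^(j+w+1) * A^(s+1) * fact (j+w+1) * fact (s+1) * a^(j+s)"
    unfolding LW AB by (simp add: power_mult_distrib algebra_simps)
  also have "\<dots> = A^(j+s+w+1) * (A * (fact (j+w+1) * fact (s+1) * a^(j+s)))"
    by (simp add: power_add[symmetric] algebra_simps)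
  also have "\<dots> \<le> A^(j+s+w+1) * ((fact j * a^(s+1)) * ((a+1)^j * fact (s+1+w) * K^(a+1)))"
    by (rule mult_le_mono[OF le_refl mult_le_mono[OF Ale st]])
  also have "\<dots> = a^(s+1) * (Wd (j+s+w+1) a j * K^(a+1))"
  proof -
    have "A^(j+s+w+1) = A^j * A^(s+1+w)" by (simp add: power_add[symmetric] add.commute add.left_commute)
    thus ?thesis unfolding RW by (simp only: mult.assoc mult.commute mult.left_commute)
  qed
  finally have "a^(s+1) * (Wd K (j+s) (j+w+1) * a^(j+s)) \<le> a^(s+1) * (Wd (j+s+w+1) a j * K^(a+1))" .
  hence "Wd K (j+s) (j+w+1) * a^(j+s) \<le> Wd (j+s+w+1) a j * K^(a+1)"
    using apos by simp
  thus ?thesis unfolding a_def K_def by (simp add: add.assoc)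
qed

definition Fd :: "nat \<Rightarrow> nat \<Rightarrow> nat \<Rightarrow> nat" where
  "Fd k a j = j * ((a+1) choose 2) + (k - j) * (a choose 2)"

lemma tc: "2 * (Suc x choose 2) = Suc x * x"
proof (induction x)
  case 0 thus ?case by simp
next
  case (Suc x)
  have "Suc (Suc x) choose 2 = (Suc x choose 2) + Suc x"
    by (simp add: numeral_2_eq_2)
  hence "2 * (Suc (Suc x) choose 2) = 2 * (Suc x choose 2) + 2 * Suc x" by simp
  also have "\<dots> = Suc (Suc x) * Suc x" using Suc.IH by simp
  finally show ?case .
qed

lemma F1:
  fixes u a v :: nat
  shows "2 * Fd (u+a+v+1) a u + a*(a-1) \<le> 2 * Fd (u+a+v) a (u+a)"
proof (cases a)
  case 0
  thus ?thesis by (simp add: Fd_def)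
next
  case (Suc b)
  have e1: "u+a+v+1 - u = a+v+1" "u+a+v - (u+a) = v" by simp_all
  have c1: "2 * ((a+1) choose 2) = (b+2)*(b+1)" using tc[of "Suc b"] Suc by simp
  have c2: "2 * (a choose 2) = (b+1)*b" using tc[of b] Suc by simp
  have "2 * Fd (u+a+v+1) a u = u * (2 * ((a+1) choose 2)) + (a+v+1) * (2 * (a choose 2))"
    unfolding Fd_def e1 by (simp add: algebra_simps)
  moreover have "2 * Fd (u+a+v) a (u+a) = (u+a) * (2 * ((a+1) choose 2)) + v * (2 * (a choose 2))"
    unfolding Fd_def e1 by (simp add: algebra_simps)
  ultimately show ?thesis unfolding c1 c2 unfolding Suc by (simp add: algebra_simps)
qed

lemma F2:
  fixes j s w :: nat
  shows "2 * Fd (j+s+w+2) (j+s) (j+w+1) + (j+s+1)*(j+s) \<le> 2 * Fd (j+s+w+1) (j+s+1) j"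
proof -
  have e1: "j+s+w+2 - (j+w+1) = s+1" "j+s+w+1 - j = s+w+1" by simp_all
  have A: "2 * Fd (j+s+w+2) (j+s) (j+w+1) = (j+w+1) * (2 * ((j+s+1) choose 2)) + (s+1) * (2 * ((j+s) choose 2))"
    unfolding Fd_def e1 by (simp add: algebra_simps)
  have B: "2 * Fd (j+s+w+1) (j+s+1) j = j * (2 * ((j+s+2) choose 2)) + (s+w+1) * (2 * ((j+s+1) choose 2))"
    unfolding Fd_def e1 by (simp add: algebra_simps)
  show ?thesis
  proof (cases j)
    case (Suc i)
    have c0: "2 * ((j+s) choose 2) = (i+s+1)*(i+s)" using tc[of "i+s"] Suc by simp
    have c1: "2 * ((j+s+1) choose 2) = (i+s+2)*(i+s+1)" using tc[of "Suc (i+s)"] Suc by simp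
    have c2: "2 * ((j+s+2) choose 2) = (i+s+3)*(i+s+2)" using tc[of "Suc (Suc (i+s))"] Suc by (simp add: algebra_simps)
    show ?thesis unfolding A B c0 c1 c2 unfolding Suc by (simp add: algebra_simps)
  next
    case 0
    show ?thesis
    proof (cases s)
      case 0
      thus ?thesis using \<open>j = 0\<close> A B by simp
    next
      case (Suc r)
      have c0: "2 * ((j+s) choose 2) = (r+1)*r" using tc[of r] Suc \<open>j = 0\<close> by simp
      have c1: "2 * ((j+s+1) choose 2) = (r+2)*(r+1)" using tc[of "Suc r"] Suc \<open>j = 0\<close> by simp
      show ?thesis unfolding A B c0 c1 unfolding Suc \<open>j = 0\<close> by (simp add: algebra_simps)
    qed
  qed
qed

lemma W_formula:
  assumes k: "k > 0"
  shows "(\<Prod>i<k. fact (sz n k i)) * fact (kL n k) * fact (kS n k) = Wd k (n div k) (n mod k)"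
proof -
  have "(\<Prod>i<k. fact (sz n k i) :: nat) = fact (n div k + 1) ^ (n mod k) * fact (n div k) ^ (k - n mod k)"
    by (rule prod_sz_gen[OF k])
  thus ?thesis unfolding Wd_def kS_def kL_eq by (simp add: mult.assoc)
qed

lemma ff_formula:
  assumes k: "k > 0"
  shows "ff n k = Fd k (n div k) (n mod k)"
  unfolding ff_def Fd_def using sum_sz_gen[OF k, of "\<lambda>x. x choose 2" n] by simp

lemma mu_bar_formula:
  assumes k: "k > 0" and m: "m_of p n \<le> n choose 2"
  shows "mu_bar p n k = fact n * real (((n choose 2) - ff n k) choose (m_of p n))
            / (real ((n choose 2) choose (m_of p n)) * real (Wd k (n div k) (n mod k)))"
proof -
  let ?Pr = "(\<Prod>i<k. fact (sz n k i)) :: nat"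
  have pos: "?Pr > 0" by (simp add: prod_pos)
  have cE: "real (card (equipartitions n k)) = fact n / real ?Pr"
    using arg_cong[OF card_EQ[OF k, of n], of real] pos by (simp add: field_simps)
  have W: "real (Wd k (n div k) (n mod k)) = real ?Pr * fact (kL n k) * fact (kS n k)"
    using arg_cong[OF W_formula[OF k, of n], of real] by simp
  show ?thesis
    unfolding mu_bar_def mu_formula[OF m] cE W by (simp add: field_simps)
qed

lemma divmod_eq: "r < d \<Longrightarrow> n = d * q + r \<Longrightarrow> n div d = q \<and> n mod d = (r::nat)"
  by simp

lemma binom_ratio:
  fixes A d m N :: nat
  assumes "m \<le> A" "A + d \<le> N" "m < N"
  shows "real ((A + d) choose m) \<ge> real (A choose m) * (real N / real (N - m)) ^ d"
  using assms(2)
proof (induction d)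
  case 0 thus ?case by simp
next
  case (Suc d)
  let ?x = "A + d"
  have IH: "real (?x choose m) \<ge> real (A choose m) * (real N / real (N - m)) ^ d"
    using Suc by simp
  have xm: "m \<le> ?x" using assms(1) by simp
  have "(Suc ?x - m) * (Suc ?x choose m) = Suc ?x * (?x choose m)"
    using binomial_absorb_comp[of "Suc ?x" m] by simp
  hence "real (Suc ?x - m) * real (Suc ?x choose m) = real (Suc ?x) * real (?x choose m)"
    by (metis of_nat_mult)
  moreover have "real (Suc ?x - m) > 0" using xm by simp
  ultimately have eq: "real (Suc ?x choose m) = real (?x choose m) * (real (Suc ?x) / real (Suc ?x - m))"
    by (simp add: field_simps)
  have fr: "real N / real (N - m) \<le> real (Suc ?x) / real (Suc ?x - m)"
  proof -
    have N: "Suc ?x \<le> N" using Suc.prems by simp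
    have p1: "real (Suc ?x - m) > 0" using xm by simp
    have p2: "real (N - m) > 0" using assms(3) by simp
    have "real N * real (Suc ?x - m) \<le> real (Suc ?x) * real (N - m)"
    proof -
      have "real (Suc ?x) * real m \<le> real N * real m" using N by (intro mult_right_mono) auto
      thus ?thesis using N xm assms(3) by (simp add: of_nat_diff algebra_simps)
    qed
    thus ?thesis using p1 p2 by (simp add: field_simps)
  qed
  have ge1: "real N / real (N - m) \<ge> 0" by simp
  have "real (A choose m) * (real N / real (N - m)) ^ Suc d
        = (real (A choose m) * (real N / real (N - m)) ^ d) * (real N / real (N - m))" by simp
  also have "\<dots> \<le> real (?x choose m) * (real (Suc ?x) / real (Suc ?x - m))"
    using IH fr ge1 by (intro mult_mono) auto
  also have "\<dots> = real ((A + Suc d) choose m)" using eq by simp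
  finally show ?case .
qed

lemma key_nat:
  fixes n k :: nat
  defines "a \<equiv> n div k" and "j \<equiv> n mod k"
  assumes k: "k > 0" and a1: "a \<ge> 1" and aa: "a * a \<le> k + 1"
  shows "Wd (k+1) (n div (k+1)) (n mod (k+1)) * a^(a-1) \<le> Wd k a j * (k+1)^(a+1)
       \<and> 2 * Fd (k+1) (n div (k+1)) (n mod (k+1)) + a*(a-1) \<le> 2 * Fd k a j"
proof -
  have nk: "n = k * a + j" unfolding a_def j_def by simp
  have jk: "j < k" unfolding j_def using k by simp
  show ?thesis
  proof (cases "a \<le> j")
    case True
    define u where "u = j - a"
    define v where "v = k - j"
    have ju: "j = u + a" and kv: "k = u + a + v" using True jk unfolding u_def v_def by simp_all
    have dm: "n div (k+1) = a \<and> n mod (k+1) = u"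
      by (rule divmod_eq) (use nk ju kv in \<open>simp_all add: algebra_simps\<close>)
    have w: "Wd (u+a+v+1) a u * a^(a-1) \<le> Wd (u+a+v) a (u+a) * (u+a+v+1)^(a+1)" by (rule W1)
    have f: "2 * Fd (u+a+v+1) a u + a*(a-1) \<le> 2 * Fd (u+a+v) a (u+a)" by (rule F1)
    show ?thesis using w f dm unfolding ju kv by simp
  next
    case False
    define s where "s = a - j - 1"
    define w where "w = k - a"
    have ak: "a \<le> k"
    proof (cases "a \<ge> 2")
      case True
      have "2 * a \<le> a * a" using True by (simp add: mult_right_mono)
      thus ?thesis using aa True by linarith
    next
      case False
      thus ?thesis using a1 k by simp
    qed
    have as: "a = j + s + 1" and kw: "k = j + s + w + 1" using False ak unfolding s_def w_def by simp_all
    have dm: "n div (k+1) = j + s \<and> n mod (k+1) = j + w + 1"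
      by (rule divmod_eq) (use nk as kw in \<open>simp_all add: algebra_simps\<close>)
    have aa': "(j+s+1)*(j+s+1) \<le> j+s+w+2" using aa unfolding as kw by simp
    have W: "Wd (j+s+w+2) (j+s) (j+w+1) * (j+s+1)^(j+s) \<le> Wd (j+s+w+1) (j+s+1) j * (j+s+w+2)^(j+s+2)"
      by (rule W2[OF aa'])
    have Fi: "2 * Fd (j+s+w+2) (j+s) (j+w+1) + (j+s+1)*(j+s) \<le> 2 * Fd (j+s+w+1) (j+s+1) j"
      by (rule F2)
    have e: "k + 1 = j+s+w+2" "a - 1 = j + s" "a + 1 = j+s+2" using as kw by simp_all
    show ?thesis using W Fi dm unfolding e unfolding kw as by (simp add: add.assoc)
  qed
qed

lemma ratio_bound:
  fixes p :: real and n k :: nat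
  defines "a \<equiv> n div k" and "N \<equiv> n choose 2" and "m \<equiv> m_of p n"
  assumes k: "k > 0" and a1: "a \<ge> 1" and aa: "a * a \<le> k + 1" and mN: "m < N"
    and fN: "ff n k + m \<le> N"
  shows "mu_bar p n k > 0 \<and>
    mu_bar p n (k+1) / mu_bar p n k \<ge> (real N / real (N - m)) ^ (a*(a-1) div 2) * real a ^ (a-1) / real (k+1) ^ (a+1)"
proof -
  define j where "j = n mod k"
  define WK where "WK = Wd (k+1) (n div (k+1)) (n mod (k+1))"
  define Wk where "Wk = Wd k a j"
  define fK where "fK = ff n (k+1)"
  define fk where "fk = ff n k"
  have ffK: "ff n (k+1) = Fd (k+1) (n div (k+1)) (n mod (k+1))" by (rule ff_formula) simp
  have key: "WK * a^(a-1) \<le> Wk * (k+1)^(a+1)" "2 * fK + a*(a-1) \<le> 2 * fk"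
    using key_nat[OF k a1[unfolded a_def] aa[unfolded a_def]]
    unfolding WK_def Wk_def fK_def fk_def ff_formula[OF k] ffK a_def j_def by simp_all
  define D where "D = fk - fK"
  have fKk: "fK + D = fk" and D: "a*(a-1) div 2 \<le> D" using key(2) unfolding D_def by auto
  have mN': "m \<le> N" using mN by simp
  have Wpos: "Wk > 0" "WK > 0" unfolding Wk_def WK_def Wd_def by simp_all
  have Nm: "real N / real (N - m) \<ge> 1" using mN by (simp add: of_nat_diff)
  have Cpos: "real (N choose m) > 0" using mN' by simp
  have ck: "real ((N - fk) choose m) > 0" using fN unfolding fk_def by simp
  have eqk: "mu_bar p n k = fact n * real ((N - fk) choose m) / (real (N choose m) * real Wk)"
    using mu_bar_formula[OF k mN'[unfolded N_def m_def]] unfolding fk_def Wk_def N_def m_def a_def j_def .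
  have eqK: "mu_bar p n (k+1) = fact n * real ((N - fK) choose m) / (real (N choose m) * real WK)"
    using mu_bar_formula[of "k+1" p n] mN' unfolding fK_def WK_def N_def m_def by simp
  have pk: "mu_bar p n k > 0" unfolding eqk using ck Cpos Wpos by (simp add: fact_gt_zero)
  have bin: "real ((N - fK) choose m) \<ge> real ((N - fk) choose m) * (real N / real (N - m)) ^ D"
  proof -
    have "(N - fk) + D = N - fK" using fKk fN unfolding fk_def by simp
    moreover have "real (((N - fk) + D) choose m) \<ge> real ((N - fk) choose m) * (real N / real (N - m)) ^ D"
      by (rule binom_ratio) (use fN fKk mN in \<open>auto simp: fk_def\<close>)
    ultimately show ?thesis by simp
  qed
  have pw: "(real N / real (N - m)) ^ D \<ge> (real N / real (N - m)) ^ (a*(a-1) div 2)"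
    by (rule power_increasing[OF D Nm])
  have ratio: "mu_bar p n (k+1) / mu_bar p n k = (real ((N - fK) choose m) / real ((N - fk) choose m)) * (real Wk / real WK)"
    unfolding eqk eqK using ck Cpos Wpos by (simp add: field_simps fact_gt_zero)
  have r1: "real ((N - fK) choose m) / real ((N - fk) choose m) \<ge> (real N / real (N - m)) ^ (a*(a-1) div 2)"
  proof -
    have "real ((N - fk) choose m) * (real N / real (N - m)) ^ (a*(a-1) div 2)
        \<le> real ((N - fk) choose m) * (real N / real (N - m)) ^ D"
      using pw ck by (intro mult_left_mono) auto
    also have "\<dots> \<le> real ((N - fK) choose m)" by (rule bin)
    finally show ?thesis using ck by (simp add: pos_le_divide_eq mult.commute)
  qed
  have r2: "real Wk / real WK \<ge> real a ^ (a-1) / real (k+1) ^ (a+1)"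
  proof -
    have "real WK * real a ^ (a-1) \<le> real Wk * real (k+1) ^ (a+1)"
      using key(1) by (metis of_nat_le_iff of_nat_mult of_nat_power)
    moreover have "real (k+1) ^ (a+1) > 0" by simp
    ultimately show ?thesis using Wpos by (simp add: divide_le_eq le_divide_eq mult.commute)
  qed
  have "(real N / real (N - m)) ^ (a*(a-1) div 2) * (real a ^ (a-1) / real (k+1) ^ (a+1))
      \<le> (real ((N - fK) choose m) / real ((N - fk) choose m)) * (real Wk / real WK)"
    by (rule mult_mono[OF r1 r2]) auto
  thus ?thesis using pk ratio by simp
qed

lemma ff_le: "k > 0 \<Longrightarrow> 2 * ff n k \<le> (n div k) * n"
proof -
  assume k: "k > 0"
  define a where "a = n div k"
  define j where "j = n mod k"
  have jk: "j \<le> k" unfolding j_def using k by (simp add: less_imp_le)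
  have n: "n = k * a + j" unfolding a_def j_def by simp
  have c1: "2 * ((a+1) choose 2) = (a+1)*a" using tc[of a] by simp
  have c2: "2 * (a choose 2) \<le> a*a"
  proof (cases a)
    case 0 thus ?thesis by simp
  next
    case (Suc b) thus ?thesis using tc[of b] by simp
  qed
  have "2 * ff n k = j * (2 * ((a+1) choose 2)) + (k - j) * (2 * (a choose 2))"
    unfolding ff_formula[OF k] Fd_def a_def j_def by (simp add: algebra_simps)
  also have "\<dots> \<le> j * ((a+1)*a) + (k - j) * (a*a)"
    unfolding c1 by (rule add_mono[OF le_refl mult_le_mono2[OF c2]])
  also have "\<dots> = a * (j * (a+1) + (k-j) * a)" by (simp add: algebra_simps)
  also have "j * (a+1) + (k-j) * a = k * a + j" using aux_arith[OF jk] by simp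
  finally have X: "2 * ff n k \<le> a * (k * a + j)" .
  show ?thesis using X[unfolded n[symmetric]] unfolding a_def .
qed

lemma m_bounds:
  assumes "0 \<le> p"
  shows "real (m_of p n) \<le> p * real (n choose 2)" "real (m_of p n) > p * real (n choose 2) - 1"
proof -
  have nn: "0 \<le> p * real (n choose 2)" using assms by simp
  show "real (m_of p n) \<le> p * real (n choose 2)"
    unfolding m_of_def using nn by (simp add: of_nat_nat)
  show "real (m_of p n) > p * real (n choose 2) - 1"
    unfolding m_of_def using nn by (simp add: of_nat_nat)
qed

lemma final_step:
  fixes p c M L x :: real and n k :: nat
  assumes p: "0 < p" "p < 1" and c: "c = ln (1/(1-p))" and x: "x = real n" and L: "L = ln x / c"
    and k: "k > 0" and M0: "M \<ge> 0"
    and H: "\<bar>x / real k - (2*L - 2*ln L/c - 2*ln 2/c)\<bar> \<le> M"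
    and C1: "2*L - 2*ln L/c - 2*ln 2/c - M - 1 \<ge> L"
    and C2: "2*L - 2*ln L/c - 2*ln 2/c + M \<le> 3*L"
    and C3: "L \<ge> 1"
    and C4: "(3*L)^2*(3*L+1) \<le> x"
    and C5: "3*L \<le> (1-p)*(x-1)" "x \<ge> 2"
    and C6: "9*L^2 \<le> (1-p)*(x*(x-1)/2)"
    and C7: "ln L \<ge> 2*(2*ln 2 + (M+2)*c/2) + 4*c"
    and C8: "ln x \<ge> 2"
    and C9: "ln (ln x) \<ge> 2 * ln c"
  shows "mu_bar p n (k+1) / mu_bar p n k \<ge> exp (1/(4*c) * ln x * ln (ln x))"
proof -
  define a where "a = n div k"
  define A where "A = real a"
  define K where "K = real k"
  define N where "N = n choose 2"
  define m where "m = m_of p n"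
  define g where "g = 2*L - 2*ln L/c - 2*ln 2/c"
  have c0: "c > 0" unfolding c using p by simp
  have Kpos: "K > 0" unfolding K_def using k by simp
  have ka1: "k * a \<le> n" unfolding a_def by simp
  have ka2: "n < k * (a+1)" unfolding a_def using k
    by (metis add.commute div_mult_mod_eq mod_less_divisor mult.commute nat_add_left_cancel_less distrib_left mult_1_right)
  have KA1: "K * A \<le> x" unfolding K_def A_def x using ka1 by (metis of_nat_le_iff of_nat_mult)
  have KA2: "x < K * (A+1)" unfolding K_def A_def x using ka2 by (metis of_nat_less_iff of_nat_mult of_nat_1 of_nat_add)
  have al1: "A \<le> x / K" using KA1 Kpos by (simp add: field_simps)
  have al2: "x / K < A + 1" using KA2 Kpos by (simp add: field_simps)
  have H1: "x / K \<ge> g - M" and H2: "x / K \<le> g + M" using H unfolding g_def K_def by auto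
  have AL: "A \<ge> L" using al2 H1 C1 unfolding g_def by linarith
  have A3: "A \<le> 3*L" using al1 H2 C2 unfolding g_def by linarith
  have A1: "A \<ge> 1" using AL C3 by linarith
  have a1: "a \<ge> 1" using A1 unfolding A_def by simp
  have Apos: "A > 0" using A1 by simp
  have L0: "L > 0" using C3 by simp
  have x0: "x > 0" using C5 by simp
  have "A*A*(A+1) \<le> (3*L)^2*(3*L+1)"
  proof -
    have "A*A \<le> (3*L)*(3*L)" using A3 Apos by (intro mult_mono) auto
    hence "A*A \<le> (3*L)^2" by (simp add: power2_eq_square)
    thus ?thesis using A3 Apos by (intro mult_mono) auto
  qed
  hence "A*A*(A+1) < K*(A+1)" using C4 KA2 by linarith
  hence "A*A < K" using Apos by (simp add: mult_less_cancel_right)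
  hence aa: "a * a \<le> k + 1" unfolding A_def K_def
    by (metis less_imp_le of_nat_less_iff of_nat_mult le_SucI Suc_eq_plus1)
  have n2: "n \<ge> 2" using C5 x by simp
  have Nr: "real N = x*(x-1)/2"
  proof -
    obtain n' where n': "n = Suc n'" using n2 by (cases n) auto
    have "2 * N = n * n'" unfolding N_def n' by (rule tc)
    hence "2 * real N = real n * real n'" by (metis of_nat_mult of_nat_numeral)
    moreover have "real n' = x - 1" unfolding x n' by simp
    ultimately show ?thesis unfolding x by simp
  qed
  have Npos: "real N \<ge> 1"
  proof -
    have "x*(x-1) \<ge> 2*1" using C5 by (intro mult_mono) auto
    thus ?thesis unfolding Nr by simp
  qed
  have mb1: "real m \<le> p * real N" and mb2: "real m > p * real N - 1"
    using m_bounds[of p n] p unfolding m_def N_def by auto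
  have mN: "m < N"
  proof -
    have "p * real N < real N" using p Npos by simp
    thus ?thesis using mb1 by simp
  qed
  have fN: "ff n k + m \<le> N"
  proof -
    have "real (2 * ff n k) \<le> real (a * n)" using ff_le[OF k, of n] unfolding a_def by (simp only: of_nat_le_iff)
    hence "2 * real (ff n k) \<le> A * x" unfolding A_def x by simp
    also have "\<dots> \<le> ((1-p)*(x-1)) * x" using A3 C5 x0 by (intro mult_right_mono) auto
    finally have "real (ff n k) \<le> (1-p) * real N" unfolding Nr by (simp add: algebra_simps)
    hence "real (ff n k) + real m \<le> real N" using mb1 by (simp add: algebra_simps)
    thus ?thesis by (metis of_nat_add of_nat_le_iff)
  qed
  have RB: "mu_bar p n (k+1) / mu_bar p n k \<ge>
      (real N / real (N - m)) ^ (a*(a-1) div 2) * real a ^ (a-1) / real (k+1) ^ (a+1)"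
    using ratio_bound[OF k a1[unfolded a_def] aa[unfolded a_def] mN[unfolded N_def m_def] fN[unfolded N_def m_def]]
    unfolding a_def N_def m_def by simp
  define \<beta> where "\<beta> = real N / real (N - m)"
  define Q where "Q = \<beta> ^ (a*(a-1) div 2) * A ^ (a-1) / (K+1) ^ (a+1)"
  have RQ: "mu_bar p n (k+1) / mu_bar p n k \<ge> Q"
  proof -
    have "real (k+1) = K+1" unfolding K_def by simp
    thus ?thesis using RB unfolding Q_def \<beta>_def A_def by (simp add: add.commute)
  qed
  have Nm: "real (N - m) = real N - real m" using mN by (simp add: of_nat_diff)
  have Nm0: "real N - real m > 0" using mN by simp
  have bpos: "\<beta> > 0" unfolding \<beta>_def using Nm Nm0 Npos by simp
  have Qpos: "Q > 0" unfolding Q_def using bpos Apos Kpos by simp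
  have lnb: "ln \<beta> \<ge> c - 1 / ((1-p) * real N)"
  proof -
    have q0: "(1-p) * real N > 0" using p Npos by simp
    have "real N - real m \<le> (1-p)*real N + 1" using mb2 by (simp add: algebra_simps)
    hence "ln (real N - real m) \<le> ln ((1-p)*real N + 1)" using Nm0 q0 by simp
    also have "(1-p)*real N + 1 = ((1-p)*real N) * (1 + 1/((1-p)*real N))"
    proof -
      have "(1-p)*real N \<noteq> 0" using q0 by linarith
      thus ?thesis by (simp add: distrib_left)
    qed
    also have "ln \<dots> = ln (1-p) + ln (real N) + ln (1 + 1/((1-p)*real N))"
    proof -
      have pos: "1 + 1/((1-p)*real N) > 0" using q0 by (metis add_pos_pos zero_less_one zero_less_divide_1_iff)
      have "ln (((1-p)*real N) * (1 + 1/((1-p)*real N))) = ln ((1-p)*real N) + ln (1 + 1/((1-p)*real N))"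
        using pos q0 by (simp add: ln_mult)
      moreover have "ln ((1-p)*real N) = ln (1-p) + ln (real N)" using p Npos by (simp add: ln_mult)
      ultimately show ?thesis by simp
    qed
    also have "ln (1 + 1/((1-p)*real N)) \<le> 1/((1-p)*real N)"
      by (rule ln_add_one_self_le_self) (use q0 in simp)
    finally have "ln (real N - real m) \<le> ln (1-p) + ln (real N) + 1/((1-p)*real N)" by simp
    moreover have "ln \<beta> = ln (real N) - ln (real N - real m)"
      unfolding \<beta>_def Nm using Nm0 Npos by (simp add: ln_div)
    moreover have "c = - ln (1-p)" unfolding c using p by (simp add: ln_div)
    ultimately show ?thesis by linarith
  qed
  have d0: "real (a*(a-1) div 2) = A*(A-1)/2"
  proof -
    have "even (a*(a-1))" by (cases "even a") auto
    hence "real (a*(a-1) div 2) = real (a*(a-1)) / 2" by (simp add: real_of_nat_div)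
    thus ?thesis unfolding A_def using a1 by (simp add: of_nat_diff)
  qed
  have T1: "real (a*(a-1) div 2) * ln \<beta> \<ge> A*(A-1)*c/2 - 1/2"
  proof -
    have AA: "A*(A-1) \<le> (1-p) * real N"
    proof -
      have "A*(A-1) \<le> A*A" using Apos by simp
      also have "\<dots> \<le> (3*L)*(3*L)" using A3 Apos by (intro mult_mono) auto
      also have "\<dots> \<le> (1-p) * real N" using C6 unfolding Nr by (simp add: power2_eq_square)
      finally show ?thesis .
    qed
    have A0: "A*(A-1) \<ge> 0" using A1 by simp
    have q0: "(1-p) * real N > 0" using p Npos by simp
    have e1: "real (a*(a-1) div 2) * ln \<beta> \<ge> A*(A-1)/2 * (c - 1/((1-p)*real N))"
      unfolding d0 using lnb A0 by (intro mult_left_mono) auto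
    have e2: "A*(A-1)/2 * (c - 1/((1-p)*real N)) = A*(A-1)*c/2 - (A*(A-1) * (1/((1-p)*real N)))/2"
      by (simp add: algebra_simps)
    have e3: "A*(A-1) * (1/((1-p)*real N)) \<le> 1" using AA q0 by (simp add: divide_le_eq)
    show ?thesis using e1 e2 e3 by argo
  qed
  have xA: "A \<le> x" using A3 C5 p by (smt (verit, best) mult_left_le_one_le)
  have K2: "K + 1 \<le> 2*x/A"
  proof -
    have "K \<le> x/A" using KA1 Apos by (simp add: field_simps)
    moreover have "1 \<le> x/A" using xA Apos by simp
    ultimately show ?thesis by simp
  qed
  have lnK: "ln (K+1) \<le> ln 2 + ln x - ln A"
  proof -
    have "ln (K+1) \<le> ln (2*x/A)" using K2 Kpos by simp
    also have "ln (2*x/A) = ln 2 + ln x - ln A" using x0 Apos by (simp add: ln_div ln_mult)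
    finally show ?thesis .
  qed
  have lnQ: "ln Q = real (a*(a-1) div 2) * ln \<beta> + (A-1) * ln A - (A+1) * ln (K+1)"
  proof -
    have "ln Q = ln (\<beta> ^ (a*(a-1) div 2)) + ln (A ^ (a-1)) - ln ((K+1) ^ (a+1))"
      unfolding Q_def using bpos Apos Kpos by (simp add: ln_div ln_mult)
    moreover have "real (a-1) = A - 1" unfolding A_def using a1 by (simp add: of_nat_diff)
    moreover have "real (a+1) = A + 1" unfolding A_def by simp
    ultimately show ?thesis by (simp only: ln_realpow)
  qed
  define B where "B = (A-1)*c/2 + 2*ln A - ln x - ln 2"
  have R: "ln Q \<ge> A*B - ln x - ln 2 - 1/2"
  proof -
    have t3: "(A+1) * ln (K+1) \<le> (A+1) * (ln 2 + ln x - ln A)" using lnK A1 by (intro mult_left_mono) auto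
    have iden: "A*(A-1)*c/2 - 1/2 + (A-1)*ln A - (A+1)*(ln 2 + ln x - ln A) = A*B - ln x - ln 2 - 1/2"
      unfolding B_def by (simp add: algebra_simps)
    show ?thesis using lnQ T1 t3 iden by (smt (verit))
  qed
  have gc: "g * c / 2 = ln x - ln L - ln 2"
  proof -
    have "L * c = ln x" unfolding L using c0 by simp
    thus ?thesis unfolding g_def using c0 by (simp add: field_simps)
  qed
  have Am: "A - 1 \<ge> g - M - 2" using al2 H1 by linarith
  have B1: "(A-1)*c/2 \<ge> (g - M - 2)*c/2" using Am c0 by (simp add: divide_right_mono mult_right_mono)
  have B2: "(g - M - 2)*c/2 = ln x - ln L - ln 2 - (M+2)*c/2"
  proof -
    have "(g - M - 2)*c/2 = g*c/2 - (M+2)*c/2" by (simp add: algebra_simps diff_divide_distrib)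
    thus ?thesis using gc by simp
  qed
  have lnAL: "ln A \<ge> ln L" using AL L0 by simp
  have Bge: "B \<ge> ln L / 2 + 2*c"
    using B1 B2 lnAL C7 unfolding B_def by argo
  have Bpos: "ln L / 2 + 2*c \<ge> 0"
  proof -
    have "(M+2)*c \<ge> 0" using M0 c0 by simp
    moreover have "ln (2::real) \<ge> 0" by simp
    ultimately show ?thesis using C7 c0 by argo
  qed
  have AB: "A*B \<ge> L*(ln L / 2 + 2*c)" using AL Bge Bpos L0 by (intro mult_mono) auto
  have LL: "L*(ln L / 2 + 2*c) = ln x * ln L / (2*c) + 2 * ln x"
    unfolding L using c0 by (simp add: field_simps)
  have ln2: "ln (2::real) < 1" by (rule ln_2_less_1)
  have R2: "ln Q \<ge> ln x * ln L / (2*c)" using R AB LL C8 ln2 by argo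
  have lnL: "ln L = ln (ln x) - ln c" unfolding L using C8 c0 by (simp add: ln_div)
  have lnL2: "ln L \<ge> ln (ln x) / 2" using lnL C9 by argo
  have lx0: "ln x \<ge> 0" using C8 by simp
  have "ln x * ln L / (2*c) \<ge> ln x * (ln (ln x) / 2) / (2*c)"
    using lnL2 lx0 c0 by (intro divide_right_mono mult_left_mono) auto
  also have "ln x * (ln (ln x) / 2) / (2*c) = 1/(4*c) * ln x * ln (ln x)" by (simp add: field_simps)
  finally have "ln Q \<ge> 1/(4*c) * ln x * ln (ln x)" using R2 by argo
  hence "exp (1/(4*c) * ln x * ln (ln x)) \<le> exp (ln Q)" by simp
  also have "exp (ln Q) = Q" using Qpos by simp
  finally show ?thesis using RQ by linarith
qed

lemma lim1: "((\<lambda>x::real. ln x / x) \<longlongrightarrow> 0) at_top" by real_asymp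
lemma lim2: "((\<lambda>x::real. ln x ^ 3 / x) \<longlongrightarrow> 0) at_top" by real_asymp
lemma lim3: "((\<lambda>x::real. ln x ^ 2 / x ^ 2) \<longlongrightarrow> 0) at_top" by real_asymp

lemma ev_small:
  assumes "((f :: real \<Rightarrow> real) \<longlongrightarrow> 0) at_top" "e > 0"
  shows "eventually (\<lambda>x. f x < e) at_top"
  using order_tendstoD(2)[OF assms] .

lemma ev_sub:
  fixes c K :: real
  assumes c: "c > 0"
  shows "eventually (\<lambda>y. y - 2 * ln y / c \<ge> K) at_top"
proof -
  have e1: "eventually (\<lambda>y. ln y / y < c/4) at_top" by (rule ev_small[OF lim1]) (use c in simp)
  have e2: "eventually (\<lambda>y::real. y \<ge> 2*\<bar>K\<bar> + 1) at_top" by (rule eventually_ge_at_top)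
  show ?thesis using e1 e2
  proof eventually_elim
    case (elim y)
    have y0: "y > 0" using elim(2) by linarith
    have "ln y < c/4 * y" using elim(1) y0 by (simp add: divide_less_eq)
    hence "2 * ln y / c < y / 2" using c by (simp add: field_simps)
    thus ?case using elim(2) by linarith
  qed
qed

lemma Lfl: "c > 0 \<Longrightarrow> filterlim (\<lambda>x::real. ln x / c) at_top at_top"
proof -
  assume c: "c > 0"
  have "filterlim (\<lambda>x::real. (1/c) * ln x) at_top at_top"
    by (rule filterlim_tendsto_pos_mult_at_top[OF tendsto_const _ ln_at_top]) (use c in simp)
  thus ?thesis by (simp add: field_simps)
qed

lemma lnLfl: "c > 0 \<Longrightarrow> filterlim (\<lambda>x::real. ln (ln x / c)) at_top at_top"
  using filterlim_compose[OF ln_at_top Lfl] by blast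

definition conds :: "real \<Rightarrow> real \<Rightarrow> real \<Rightarrow> real \<Rightarrow> real \<Rightarrow> bool" where
  "conds p c M x L \<longleftrightarrow> 2*L - 2*ln L/c - 2*ln 2/c - M - 1 \<ge> L \<and> 2*L - 2*ln L/c - 2*ln 2/c + M \<le> 3*L
     \<and> L \<ge> 1 \<and> (3*L)^2*(3*L+1) \<le> x \<and> 3*L \<le> (1-p)*(x-1) \<and> x \<ge> 2 \<and> 9*L^2 \<le> (1-p)*(x*(x-1)/2)
     \<and> ln L \<ge> 2*(2*ln 2 + (M+2)*c/2) + 4*c \<and> ln x \<ge> 2 \<and> ln (ln x) \<ge> 2 * ln c"

lemma ev_conds:
  fixes p c M :: real
  assumes p: "0 < p" "p < 1" and c: "c > 0" and M: "M \<ge> 0"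
  shows "eventually (\<lambda>x. conds p c M x (ln x / c)) at_top"
proof -
  have e1: "eventually (\<lambda>x. ln x / c - 2 * ln (ln x / c) / c \<ge> 2*ln 2/c + M + 1) at_top"
    using eventually_compose_filterlim[OF ev_sub[OF c] Lfl[OF c]] .
  have e2: "eventually (\<lambda>x. ln x / c \<ge> max 1 M) at_top"
    using eventually_compose_filterlim[OF eventually_ge_at_top Lfl[OF c]] .
  have e3: "eventually (\<lambda>x. ln x ^ 3 / x < c^3/36) at_top" by (rule ev_small[OF lim2]) (use c in simp)
  have e4: "eventually (\<lambda>x. ln x / x < c*(1-p)/6) at_top" by (rule ev_small[OF lim1]) (use c p in simp)
  have e5: "eventually (\<lambda>x. ln x ^ 2 / x ^ 2 < (1-p)*c^2/36) at_top" by (rule ev_small[OF lim3]) (use c p in simp)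
  have e6: "eventually (\<lambda>x::real. x \<ge> 2) at_top" by (rule eventually_ge_at_top)
  have e7: "eventually (\<lambda>x. ln (ln x / c) \<ge> 2*(2*ln 2 + (M+2)*c/2) + 4*c) at_top"
    using eventually_compose_filterlim[OF eventually_ge_at_top lnLfl[OF c]] .
  have e8: "eventually (\<lambda>x::real. ln x \<ge> 2) at_top"
    using eventually_compose_filterlim[OF eventually_ge_at_top ln_at_top] .
  have e9: "eventually (\<lambda>x::real. ln (ln x) \<ge> 2 * ln c) at_top"
    using eventually_compose_filterlim[OF eventually_ge_at_top filterlim_compose[OF ln_at_top ln_at_top]] .
  show ?thesis using e1 e2 e3 e4 e5 e6 e7 e8 e9
  proof eventually_elim
    case (elim x)
    define L where "L = ln x / c"
    have x2: "x \<ge> 2" using elim(6) .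
    have x0: "x > 0" using x2 by simp
    have L1: "L \<ge> 1" and LM: "L \<ge> M" using elim(2) unfolding L_def by auto
    have lnL0: "ln L \<ge> 0" using L1 by simp
    have ln20: "ln (2::real) \<ge> 0" by simp
    have lnx: "ln x = c * L" unfolding L_def using c by simp
    have C1: "2*L - 2*ln L/c - 2*ln 2/c - M - 1 \<ge> L" using elim(1) unfolding L_def by simp
    have C2: "2*L - 2*ln L/c - 2*ln 2/c + M \<le> 3*L"
    proof -
      have "2*ln L/c \<ge> 0" "2*ln 2/c \<ge> 0" using lnL0 ln20 c by simp_all
      thus ?thesis using LM by linarith
    qed
    have C4: "(3*L)^2*(3*L+1) \<le> x"
    proof -
      have "(3*L)^2*(3*L+1) \<le> (3*L)^2*(4*L)" using L1 by (intro mult_left_mono) auto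
      also have "\<dots> = 36 * L^3" by (simp add: power2_eq_square power3_eq_cube)
      also have "L^3 = ln x ^ 3 / c^3" unfolding L_def by (simp add: power_divide)
      also have "36 * (ln x ^ 3 / c^3) \<le> x"
      proof -
        have "ln x ^ 3 < c^3/36 * x" using elim(3) x0 by (simp add: divide_less_eq)
        thus ?thesis using c by (simp add: field_simps)
      qed
      finally show ?thesis .
    qed
    have C5: "3*L \<le> (1-p)*(x-1)"
    proof -
      have "ln x < c*(1-p)/6 * x" using elim(4) x0 by (simp add: divide_less_eq)
      hence "3*L \<le> (1-p)*x/2" unfolding L_def using c by (simp add: field_simps)
      also have "(1-p)*x/2 \<le> (1-p)*(x-1)"
      proof -
        have "(1-p)*(x/2) \<le> (1-p)*(x-1)" using x2 p by (intro mult_left_mono) auto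
        thus ?thesis by simp
      qed
      finally show ?thesis .
    qed
    have C6: "9*L^2 \<le> (1-p)*(x*(x-1)/2)"
    proof -
      have "ln x ^ 2 < (1-p)*c^2/36 * x^2" using elim(5) x0 by (simp add: divide_less_eq)
      hence "9*L^2 \<le> (1-p)*x^2/4" unfolding L_def using c by (simp add: field_simps power_divide)
      also have "(1-p)*x^2/4 \<le> (1-p)*(x*(x-1)/2)"
      proof -
        have "x^2 \<le> 2*(x*(x-1))" using x2 by (simp add: power2_eq_square algebra_simps)
        hence "(1-p)*(x^2/4) \<le> (1-p)*(x*(x-1)/2)" using p by (intro mult_left_mono) auto
        thus ?thesis by simp
      qed
      finally show ?thesis .
    qed
    show ?case unfolding conds_def L_def[symmetric]
      using C1 C2 L1 C4 C5 x2 C6 elim(7) elim(8) elim(9) unfolding L_def by auto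
  qed
qed

theorem lemma3:
  fixes p b :: real and gamma :: "nat \<Rightarrow> real" and k :: "nat \<Rightarrow> nat"
  assumes "0 < p" and "p < 1 - 1 / exp 2"
    and "b = 1 / (1 - p)"
    and "\<And>n. gamma n = 2 * log b (real n) - 2 * log b (log b (real n)) - 2 * log b 2"
    and "\<And>n. k n > 0"
    and "(\<lambda>n. real n / real (k n) - gamma n) \<in> O(\<lambda>_. 1)"
  shows "\<exists>C>0. \<forall>\<^sub>F n in at_top.
           mu_bar p n (k n + 1) / mu_bar p n (k n) \<ge> exp (C * ln (real n) * ln (ln (real n)))"
proof -
  have p0: "0 < p" using assms(1) .
  have p1: "p < 1" using assms(2) by (smt (verit) exp_gt_zero divide_pos_pos)
  define c where "c = ln b"
  have cb: "c = ln (1/(1-p))" unfolding c_def assms(3) ..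
  have c0: "c > 0" unfolding cb using p0 p1 by simp
  obtain M where M0: "M > 0" and M: "eventually (\<lambda>n. norm (real n / real (k n) - gamma n) \<le> M * norm (1::real)) at_top"
    using landau_o.bigE[OF assms(6)] by blast
  have gam: "gamma n = 2 * (ln (real n) / c) - 2 * ln (ln (real n) / c) / c - 2 * ln 2 / c" for n
    unfolding assms(4) log_def c_def by simp
  have EV: "eventually (\<lambda>n. conds p c M (real n) (ln (real n) / c)) at_top"
    using eventually_compose_filterlim[OF ev_conds[OF p0 p1 c0 less_imp_le[OF M0]] filterlim_real_sequentially] .
  show ?thesis
  proof (intro exI[of _ "1/(4*c)"] conjI)
    show "1/(4*c) > 0" using c0 by simp
    show "\<forall>\<^sub>F n in at_top. mu_bar p n (k n + 1) / mu_bar p n (k n) \<ge> exp (1/(4*c) * ln (real n) * ln (ln (real n)))"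
      using EV M
    proof eventually_elim
      case (elim n)
      have H: "\<bar>real n / real (k n) - (2*(ln (real n)/c) - 2*ln (ln (real n)/c)/c - 2*ln 2/c)\<bar> \<le> M"
        using elim(2) gam[of n] by simp
      show ?case
        using final_step[OF p0 p1 cb refl refl assms(5)[of n] less_imp_le[OF M0] H]
          elim(1) unfolding conds_def by blast
    qed
  qed
qed

end
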